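(* A $\star$-metric space $(X,d^\star)$ is compact (i.e. $(X,\mathscr{T}_{d^\star})$ is a compact topological space) if and only if $(X,d^\star)$ is complete and totally bounded.
   Context: A $t$-definer is a function $\star:[0,\infty)\times[0,\infty)\to[0,\infty)$ such that for all $a,b,c\ge 0$: $a\star b=b\star a$; $a\star(b\star c)=(a\star b)\star c$; if $a\le b$ then $a\star c\le b\star c$; $a\star 0=a$; and $\star$ is continuous in its first variable with respect to the Euclidean topology. Given a nonempty set $X$ and a $t$-definer $\star$, a $\star$-metric on $X$ is a function $d^\star:X\times X\to[0,\infty)$ such that for all $x,y,z\in X$: $d^\star(x,y)=0$ iff $x=y$; $d^\star(x,y)=d^\star(y,x)$; and $d^\star(x,y)\le d^\star(x,z)\star d^\star(z,y)$. Put $B_{d^\star}(a,r)=\{x\in X: d^\star(a,x)<r\}$ and let $\mathscr{T}_{d^\star}$ be the topology consisting of all $U\subseteq X$ such that for each $a\in U$ some $B_{d^\star}(a,r)$, $r>0$, is contained in $U$. $(X,d^\star)$ is totally bounded if for every $\epsilon>0$ there is a finite $F\subseteq X$ with $X=\bigcup_{x\in F}B_{d^\star}(x,\epsilon)$. A sequence $\{x_n\}$ is Cauchy if for every $\epsilon>0$ there is $k$ with $d^\star(x_n,x_m)<\epsilon$ for all $m,n\ge k$; it converges to $x$ if for every $\epsilon>0$ there is $k$ with $d^\star(x,x_n)<\epsilon$ for $n\ge k$. $(X,d^\star)$ is complete if every Cauchy sequence converges to a point of $X$. *)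

theory Defs
  imports "HOL-Analysis.Analysis"
begin

text \<open>A t-definer: a binary operation on [0,\<infinity>) (represented as a real function,
  only its values on nonnegative arguments matter).\<close>
definition t_definer :: "(real \<Rightarrow> real \<Rightarrow> real) \<Rightarrow> bool" where
  "t_definer star \<longleftrightarrow>
     (\<forall>a\<ge>0. \<forall>b\<ge>0. star a b \<ge> 0) \<and>
     (\<forall>a\<ge>0. \<forall>b\<ge>0. star a b = star b a) \<and>
     (\<forall>a\<ge>0. \<forall>b\<ge>0. \<forall>c\<ge>0. star a (star b c) = star (star a b) c) \<and>
     (\<forall>a\<ge>0. \<forall>b\<ge>0. \<forall>c\<ge>0. a \<le> b \<longrightarrow> star a c \<le> star b c) \<and>
     (\<forall>a\<ge>0. star a 0 = a) \<and>
     (\<forall>c\<ge>0. continuous_on {0..} (\<lambda>a. star a c))"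

definition star_metric :: "(real \<Rightarrow> real \<Rightarrow> real) \<Rightarrow> 'a set \<Rightarrow> ('a \<Rightarrow> 'a \<Rightarrow> real) \<Rightarrow> bool" where
  "star_metric star X d \<longleftrightarrow>
     (\<forall>x\<in>X. \<forall>y\<in>X. d x y \<ge> 0) \<and>
     (\<forall>x\<in>X. \<forall>y\<in>X. d x y = 0 \<longleftrightarrow> x = y) \<and>
     (\<forall>x\<in>X. \<forall>y\<in>X. d x y = d y x) \<and>
     (\<forall>x\<in>X. \<forall>y\<in>X. \<forall>z\<in>X. d x y \<le> star (d x z) (d z y))"

definition sball :: "'a set \<Rightarrow> ('a \<Rightarrow> 'a \<Rightarrow> real) \<Rightarrow> 'a \<Rightarrow> real \<Rightarrow> 'a set" where
  "sball X d a r = {x\<in>X. d a x < r}"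

definition star_topology :: "'a set \<Rightarrow> ('a \<Rightarrow> 'a \<Rightarrow> real) \<Rightarrow> 'a topology" where
  "star_topology X d = topology (\<lambda>U. U \<subseteq> X \<and> (\<forall>a\<in>U. \<exists>r>0. sball X d a r \<subseteq> U))"

definition star_totally_bounded :: "'a set \<Rightarrow> ('a \<Rightarrow> 'a \<Rightarrow> real) \<Rightarrow> bool" where
  "star_totally_bounded X d \<longleftrightarrow>
     (\<forall>\<epsilon>>0. \<exists>F. finite F \<and> F \<subseteq> X \<and> X = (\<Union>x\<in>F. sball X d x \<epsilon>))"

definition star_Cauchy :: "'a set \<Rightarrow> ('a \<Rightarrow> 'a \<Rightarrow> real) \<Rightarrow> (nat \<Rightarrow> 'a) \<Rightarrow> bool" where
  "star_Cauchy X d s \<longleftrightarrow> (\<forall>n. s n \<in> X) \<and>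
     (\<forall>\<epsilon>>0. \<exists>k. \<forall>m\<ge>k. \<forall>n\<ge>k. d (s n) (s m) < \<epsilon>)"

definition star_converges :: "'a set \<Rightarrow> ('a \<Rightarrow> 'a \<Rightarrow> real) \<Rightarrow> (nat \<Rightarrow> 'a) \<Rightarrow> 'a \<Rightarrow> bool" where
  "star_converges X d s x \<longleftrightarrow> (\<forall>\<epsilon>>0. \<exists>k. \<forall>n\<ge>k. d x (s n) < \<epsilon>)"

definition star_complete :: "'a set \<Rightarrow> ('a \<Rightarrow> 'a \<Rightarrow> real) \<Rightarrow> bool" where
  "star_complete X d \<longleftrightarrow> (\<forall>s. star_Cauchy X d s \<longrightarrow> (\<exists>x\<in>X. star_converges X d s x))"

end

theory Submission
  imports Defs
begin

lemma star_P1: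
  assumes T: "t_definer star" and s: "s \<ge> 0" and r: "s < r"
  shows "\<exists>e>0. \<forall>c. 0 \<le> c \<and> c < e \<longrightarrow> star s c < r"
proof -
  have comm: "\<forall>a\<ge>0. \<forall>b\<ge>0. star a b = star b a" and z: "\<forall>a\<ge>0. star a 0 = a"
    and cont: "continuous_on {0..} (\<lambda>a. star a s)"
    using T s unfolding t_definer_def by auto
  have "(0::real) \<in> {0..}" by simp
  from cont[unfolded continuous_on_iff, rule_format, OF this, of "r - s"] r
  obtain e where e: "e > 0" "\<forall>c\<in>{0..}. dist c 0 < e \<longrightarrow> dist (star c s) (star 0 s) < r - s"
    by auto
  have s0: "star 0 s = s" using comm z s by (metis order_refl)
  show ?thesis
  proof (intro exI[of _ e] conjI allI impI)
    fix c assume c: "0 \<le> c \<and> c < e"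
    then have "dist (star c s) s < r - s" using e s0 by (auto simp: dist_real_def)
    moreover have "star s c = star c s" using comm c s by auto
    ultimately show "star s c < r" by (auto simp: dist_real_def)
  qed (fact e)
qed

lemma star_P2:
  assumes T: "t_definer star" and ep: "\<epsilon> > 0"
  shows "\<exists>\<delta>>0. \<forall>a b. 0 \<le> a \<and> a < \<delta> \<and> 0 \<le> b \<and> b < \<delta> \<longrightarrow> star a b < \<epsilon>"
proof -
  have comm: "\<forall>a\<ge>0. \<forall>b\<ge>0. star a b = star b a"
    and mono: "\<forall>a\<ge>0. \<forall>b\<ge>0. \<forall>c\<ge>0. a \<le> b \<longrightarrow> star a c \<le> star b c"
    using T unfolding t_definer_def by auto
  obtain e where e: "e > 0" "\<forall>c. 0 \<le> c \<and> c < e \<longrightarrow> star (\<epsilon>/2) c < \<epsilon>"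
    using star_P1[OF T, of "\<epsilon>/2" \<epsilon>] ep by auto
  show ?thesis
  proof (intro exI[of _ "min e (\<epsilon>/2)"] conjI allI impI)
    fix a b assume ab: "0 \<le> a \<and> a < min e (\<epsilon>/2) \<and> 0 \<le> b \<and> b < min e (\<epsilon>/2)"
    have "star a b = star b a" using comm ab by auto
    also have "\<dots> \<le> star (\<epsilon>/2) a" using mono ab ep by auto
    also have "\<dots> < \<epsilon>" using e ab by auto
    finally show "star a b < \<epsilon>" .
  qed (use e ep in auto)
qed

lemma T1:
  assumes T: "t_definer star" and M: "star_metric star X d"
    and a: "a \<in> X" and y: "y \<in> X" and lt: "d a y < r"
  shows "\<exists>e>0. \<forall>z\<in>X. d y z < e \<longrightarrow> d a z < r"
proof -
  have nn: "\<forall>x\<in>X. \<forall>y\<in>X. d x y \<ge> 0" and tri: "\<forall>x\<in>X. \<forall>y\<in>X. \<forall>z\<in>X. d x y \<le> star (d x z) (d z y)"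
    using M unfolding star_metric_def by auto
  obtain e where e: "e > 0" "\<forall>c. 0 \<le> c \<and> c < e \<longrightarrow> star (d a y) c < r"
    using star_P1[OF T, of "d a y" r] nn a y lt by auto
  show ?thesis
  proof (intro exI[of _ e] conjI ballI impI)
    fix z assume z: "z \<in> X" "d y z < e"
    have "d a z \<le> star (d a y) (d y z)" using tri a y z by auto
    also have "\<dots> < r" using e z nn y by auto
    finally show "d a z < r" .
  qed (fact e)
qed

lemma T2:
  assumes T: "t_definer star" and M: "star_metric star X d" and ep: "\<epsilon> > 0"
  shows "\<exists>\<delta>>0. \<forall>x\<in>X. \<forall>y\<in>X. \<forall>z\<in>X. d x z < \<delta> \<longrightarrow> d z y < \<delta> \<longrightarrow> d x y < \<epsilon>"
proof -
  have nn: "\<forall>x\<in>X. \<forall>y\<in>X. d x y \<ge> 0" and tri: "\<forall>x\<in>X. \<forall>y\<in>X. \<forall>z\<in>X. d x y \<le> star (d x z) (d z y)"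
    using M unfolding star_metric_def by auto
  obtain \<delta> where \<delta>: "\<delta> > 0" "\<forall>a b. 0 \<le> a \<and> a < \<delta> \<and> 0 \<le> b \<and> b < \<delta> \<longrightarrow> star a b < \<epsilon>"
    using star_P2[OF T ep] by auto
  show ?thesis
  proof (intro exI[of _ \<delta>] conjI ballI impI)
    fix x y z assume xyz: "x \<in> X" "y \<in> X" "z \<in> X" "d x z < \<delta>" "d z y < \<delta>"
    have "d x y \<le> star (d x z) (d z y)" using tri xyz by auto
    also have "\<dots> < \<epsilon>" using \<delta> xyz nn by auto
    finally show "d x y < \<epsilon>" .
  qed (fact \<delta>)
qed

lemma openin_star:
  "openin (star_topology X d) U \<longleftrightarrow> U \<subseteq> X \<and> (\<forall>a\<in>U. \<exists>r>0. sball X d a r \<subseteq> U)"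
proof -
  have I: "S \<inter> T \<subseteq> X \<and> (\<forall>a\<in>S \<inter> T. \<exists>r>0. sball X d a r \<subseteq> S \<inter> T)"
    if S: "S \<subseteq> X \<and> (\<forall>a\<in>S. \<exists>r>0. sball X d a r \<subseteq> S)"
      and T: "T \<subseteq> X \<and> (\<forall>a\<in>T. \<exists>r>0. sball X d a r \<subseteq> T)" for S T
  proof -
    have "\<forall>a\<in>S \<inter> T. \<exists>r>0. sball X d a r \<subseteq> S \<inter> T"
    proof
      fix a assume "a \<in> S \<inter> T"
      then obtain r1 r2 where "r1 > 0" "sball X d a r1 \<subseteq> S" "r2 > 0" "sball X d a r2 \<subseteq> T"
        using S T by blast
      then show "\<exists>r>0. sball X d a r \<subseteq> S \<inter> T"
        by (intro exI[of _ "min r1 r2"]) (auto simp: sball_def)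
    qed
    moreover have "S \<inter> T \<subseteq> X" using S by auto
    ultimately show ?thesis by (intro conjI)
  qed
  have U: "\<Union>K \<subseteq> X \<and> (\<forall>a\<in>\<Union>K. \<exists>r>0. sball X d a r \<subseteq> \<Union>K)"
    if H: "\<forall>S\<in>K. S \<subseteq> X \<and> (\<forall>a\<in>S. \<exists>r>0. sball X d a r \<subseteq> S)" for K
  proof (intro conjI ballI)
    show "\<Union>K \<subseteq> X" using H by auto
  next
    fix a assume "a \<in> \<Union>K"
    then obtain S where S: "S \<in> K" "a \<in> S" by auto
    have "\<forall>a\<in>S. \<exists>r>0. sball X d a r \<subseteq> S" using H S(1) by blast
    then obtain r where "r > 0" "sball X d a r \<subseteq> S" using S(2) by blast
    then show "\<exists>r>0. sball X d a r \<subseteq> \<Union>K" using S by blast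
  qed
  have "istopology (\<lambda>U. U \<subseteq> X \<and> (\<forall>a\<in>U. \<exists>r>0. sball X d a r \<subseteq> U))"
    unfolding istopology_def
    apply (rule conjI)
     apply (intro allI impI)
     apply (rule I; assumption)
    apply (intro allI impI)
    apply (rule U; assumption)
    done
  then show ?thesis unfolding star_topology_def by simp
qed

lemma topspace_star: "topspace (star_topology X d) = X"
proof -
  have "openin (star_topology X d) X" unfolding openin_star by (auto simp: sball_def intro: exI[of _ 1])
  moreover have "\<And>U. openin (star_topology X d) U \<Longrightarrow> U \<subseteq> X" unfolding openin_star by auto
  ultimately show ?thesis unfolding topspace_def by auto
qed

lemma sball_open:
  assumes T: "t_definer star" and M: "star_metric star X d" and a: "a \<in> X"
  shows "openin (star_topology X d) (sball X d a r)"
  unfolding openin_star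
proof (intro conjI ballI)
  fix y assume "y \<in> sball X d a r"
  then have y: "y \<in> X" "d a y < r" by (auto simp: sball_def)
  from T1[OF T M a y] obtain e where "e > 0" "\<forall>z\<in>X. d y z < e \<longrightarrow> d a z < r" by auto
  then show "\<exists>e>0. sball X d y e \<subseteq> sball X d a r" by (auto simp: sball_def)
qed (auto simp: sball_def)


lemma compact_star:
  "compact_space (star_topology X d) \<longleftrightarrow>
     (\<forall>\<U>. (\<forall>U\<in>\<U>. openin (star_topology X d) U) \<and> X \<subseteq> \<Union>\<U>
        \<longrightarrow> (\<exists>\<F>. finite \<F> \<and> \<F> \<subseteq> \<U> \<and> X \<subseteq> \<Union>\<F>))"
  by (simp add: compact_space_alt topspace_star)

lemma compact_imp_tb:
  assumes T: "t_definer star" and M: "star_metric star X d" and C: "compact_space (star_topology X d)"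
  shows "star_totally_bounded X d"
  unfolding star_totally_bounded_def
proof (intro allI impI)
  fix \<epsilon> :: real assume ep: "\<epsilon> > 0"
  have d0: "\<forall>x\<in>X. d x x = 0" using M unfolding star_metric_def by auto
  have cov: "X \<subseteq> \<Union>((\<lambda>x. sball X d x \<epsilon>) ` X)" using d0 ep by (auto simp: sball_def)
  have op: "\<forall>u\<in>(\<lambda>x. sball X d x \<epsilon>) ` X. openin (star_topology X d) u"
    using sball_open[OF T M] by auto
  obtain F' where F': "finite F'" "F' \<subseteq> (\<lambda>x. sball X d x \<epsilon>) ` X" "X \<subseteq> \<Union>F'"
    using C[unfolded compact_star, rule_format, OF conjI[OF op cov]] by blast
  obtain F where F: "F \<subseteq> X" "finite F" "F' = (\<lambda>x. sball X d x \<epsilon>) ` F"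
    using finite_subset_image[OF F'(1,2)] by blast
  show "\<exists>F. finite F \<and> F \<subseteq> X \<and> X = (\<Union>x\<in>F. sball X d x \<epsilon>)"
    using F F' by (intro exI[of _ F]) (auto simp: sball_def)
qed

lemma compact_imp_complete:
  assumes T: "t_definer star" and M: "star_metric star X d" and C: "compact_space (star_topology X d)"
  shows "star_complete X d"
  unfolding star_complete_def
proof (intro allI impI)
  fix s assume S: "star_Cauchy X d s"
  have sX: "\<And>n. s n \<in> X" using S unfolding star_Cauchy_def by auto
  have cl: "\<exists>x\<in>X. \<forall>e>0. \<forall>k. \<exists>n\<ge>k. d x (s n) < e"
  proof (rule ccontr)
    assume "\<not> ?thesis"
    then have "\<forall>x\<in>X. \<exists>e. e > 0 \<and> (\<exists>k. \<forall>n\<ge>k. \<not> d x (s n) < e)" by blast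
    then obtain e k where ek: "\<And>x. x \<in> X \<Longrightarrow> e x > 0 \<and> (\<forall>n\<ge>k x. \<not> d x (s n) < e x)"
      by metis
    have op: "\<forall>u\<in>(\<lambda>x. sball X d x (e x)) ` X. openin (star_topology X d) u"
      using sball_open[OF T M] by auto
    have d0: "\<forall>x\<in>X. d x x = 0" using M unfolding star_metric_def by auto
    have cov: "X \<subseteq> \<Union>((\<lambda>x. sball X d x (e x)) ` X)" using d0 ek by (auto simp: sball_def)
    obtain F' where F': "finite F'" "F' \<subseteq> (\<lambda>x. sball X d x (e x)) ` X" "X \<subseteq> \<Union>F'"
      using C[unfolded compact_star, rule_format, OF conjI[OF op cov]] by blast
    obtain F where F: "F \<subseteq> X" "finite F" "F' = (\<lambda>x. sball X d x (e x)) ` F"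
      using finite_subset_image[OF F'(1,2)] by blast
    define K where "K = (\<Sum>x\<in>F. k x)"
    obtain x where x: "x \<in> F" "s K \<in> sball X d x (e x)" using F F' sX[of K] by auto
    have "k x \<le> K" unfolding K_def using x(1) F(2) by (simp add: member_le_sum)
    then show False using ek[of x] x F by (auto simp: sball_def)
  qed
  then obtain x where x: "x \<in> X" "\<forall>e>0. \<forall>k. \<exists>n\<ge>k. d x (s n) < e" by blast
  have "star_converges X d s x"
    unfolding star_converges_def
  proof (intro allI impI)
    fix \<epsilon> :: real assume ep: "\<epsilon> > 0"
    obtain \<delta> where \<delta>: "\<delta> > 0" "\<forall>x\<in>X. \<forall>y\<in>X. \<forall>z\<in>X. d x z < \<delta> \<longrightarrow> d z y < \<delta> \<longrightarrow> d x y < \<epsilon>"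
      using T2[OF T M ep] by blast
    obtain k where k: "\<forall>m\<ge>k. \<forall>n\<ge>k. d (s n) (s m) < \<delta>" using S \<delta>(1) unfolding star_Cauchy_def by blast
    obtain n where n: "n \<ge> k" "d x (s n) < \<delta>" using x(2) \<delta>(1) by blast
    show "\<exists>k. \<forall>m\<ge>k. d x (s m) < \<epsilon>"
    proof (intro exI[of _ k] allI impI)
      fix m assume "m \<ge> k"
      then have "d (s n) (s m) < \<delta>" using k n by blast
      then show "d x (s m) < \<epsilon>" using \<delta>(2) x(1) sX n by blast
    qed
  qed
  then show "\<exists>x\<in>X. star_converges X d s x" using x by blast
qed

lemma tb_complete_imp_compact:
  assumes T: "t_definer star" and M: "star_metric star X d"
    and Cp: "star_complete X d" and TB: "star_totally_bounded X d"
  shows "compact_space (star_topology X d)"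
  unfolding compact_star
proof (intro allI impI, elim conjE)
  fix \<U> assume op: "\<forall>U\<in>\<U>. openin (star_topology X d) U" and cov: "X \<subseteq> \<Union>\<U>"
  show "\<exists>\<F>. finite \<F> \<and> \<F> \<subseteq> \<U> \<and> X \<subseteq> \<Union>\<F>"
  proof (rule ccontr)
    assume nc: "\<not> (\<exists>\<F>. finite \<F> \<and> \<F> \<subseteq> \<U> \<and> X \<subseteq> \<Union>\<F>)"
    define bad where "bad A \<longleftrightarrow> A \<subseteq> X \<and> \<not> (\<exists>\<F>. finite \<F> \<and> \<F> \<subseteq> \<U> \<and> A \<subseteq> \<Union>\<F>)" for A
    have step: "\<exists>x. x \<in> X \<and> bad (A \<inter> sball X d x r)" if bA: "bad A" and rp: "r > 0" for A r
    proof (rule ccontr)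
      assume "\<not> ?thesis"
      note nb = this
      have h: "\<forall>x\<in>X. \<exists>\<F>. finite \<F> \<and> \<F> \<subseteq> \<U> \<and> A \<inter> sball X d x r \<subseteq> \<Union>\<F>"
      proof
        fix x assume x: "x \<in> X"
        then have "\<not> bad (A \<inter> sball X d x r)" using nb by blast
        moreover have "A \<inter> sball X d x r \<subseteq> X" by (auto simp: sball_def)
        ultimately show "\<exists>\<F>. finite \<F> \<and> \<F> \<subseteq> \<U> \<and> A \<inter> sball X d x r \<subseteq> \<Union>\<F>"
          unfolding bad_def by blast
      qed
      have ex: "\<exists>G. finite G \<and> G \<subseteq> X \<and> X = (\<Union>x\<in>G. sball X d x r)"
        by (rule TB[unfolded star_totally_bounded_def, rule_format, OF rp])
      from ex obtain G where G0: "finite G \<and> G \<subseteq> X \<and> X = (\<Union>x\<in>G. sball X d x r)"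
        by (rule exE)
      have G: "finite G" "G \<subseteq> X" "X \<subseteq> (\<Union>x\<in>G. sball X d x r)"
        using conjunct1[OF G0] conjunct1[OF conjunct2[OF G0]] equalityD1[OF conjunct2[OF conjunct2[OF G0]]]
        by - assumption+
      from bchoice[OF h] obtain Ff where
        Ff: "\<forall>x\<in>X. finite (Ff x) \<and> Ff x \<subseteq> \<U> \<and> A \<inter> sball X d x r \<subseteq> \<Union>(Ff x)" by blast
      have f1: "finite (\<Union>(Ff ` G))" using G(1) G(2) Ff by (intro finite_UN_I) auto
      have f2: "\<Union>(Ff ` G) \<subseteq> \<U>" using G(2) Ff by auto
      have f3: "A \<subseteq> \<Union>(\<Union>(Ff ` G))"
      proof
        fix y assume y: "y \<in> A"
        have AX0: "A \<subseteq> X" using bA unfolding bad_def by (rule conjunct1)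
        have "y \<in> X" using AX0 y by (rule subsetD)
        then have "y \<in> (\<Union>x\<in>G. sball X d x r)" using G(3) by (intro subsetD[OF G(3)])
        then obtain x where x: "x \<in> G" "y \<in> sball X d x r" by (rule UN_E)
        have "x \<in> X" using x(1) G(2) by blast
        then have "A \<inter> sball X d x r \<subseteq> \<Union>(Ff x)" using Ff by blast
        then have "y \<in> \<Union>(Ff x)" using x(2) y by blast
        then show "y \<in> \<Union>(\<Union>(Ff ` G))" using x(1) by blast
      qed
      have E: "\<exists>\<F>. finite \<F> \<and> \<F> \<subseteq> \<U> \<and> A \<subseteq> \<Union>\<F>"
        by (rule exI[of _ "\<Union>(Ff ` G)"], rule conjI[OF f1 conjI[OF f2 f3]])
      have NE: "\<not> (\<exists>\<F>. finite \<F> \<and> \<F> \<subseteq> \<U> \<and> A \<subseteq> \<Union>\<F>)"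
        using bA unfolding bad_def by (rule conjunct2)
      show False using NE E by (rule notE)
    qed
    define r :: "nat \<Rightarrow> real" where "r n = 1 / real (Suc n)" for n
    have rpos: "r n > 0" for n unfolding r_def by simp
    define cen where "cen A n = (SOME x. x \<in> X \<and> bad (A \<inter> sball X d x (r n)))" for A n
    define A where "A = rec_nat X (\<lambda>n B. B \<inter> sball X d (cen B n) (r n))"
    have A0: "A 0 = X" by (simp add: A_def)
    have AS: "A (Suc n) = A n \<inter> sball X d (cen (A n) n) (r n)" for n by (simp add: A_def)
    have badA: "bad (A n)" for n
    proof (induction n)
      case 0
      show ?case unfolding A0 bad_def using nc by blast
    next
      case (Suc n)
      show ?case unfolding AS cen_def using someI_ex[OF step[OF Suc rpos]] by blast
    qed
    have cenX: "cen (A n) n \<in> X" for n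
      unfolding cen_def using someI_ex[OF step[OF badA rpos]] by blast
    have AX: "A n \<subseteq> X" for n using badA unfolding bad_def by blast
    have AS': "A (Suc n) \<subseteq> A n" for n unfolding AS by (rule Int_lower1)
    have mono: "A m \<subseteq> A n" if "n \<le> m" for m n
      by (rule lift_Suc_antimono_le[of A, OF AS' that])
    have ne: "A n \<noteq> {}" for n
    proof
      assume e: "A n = {}"
      have E: "\<exists>\<F>. finite \<F> \<and> \<F> \<subseteq> \<U> \<and> A n \<subseteq> \<Union>\<F>"
        using e by (intro exI[of _ "{}"]) simp
      have NE: "\<not> (\<exists>\<F>. finite \<F> \<and> \<F> \<subseteq> \<U> \<and> A n \<subseteq> \<Union>\<F>)"
        using badA[of n] unfolding bad_def by (rule conjunct2)
      show False using NE E by (rule notE)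
    qed
    define a where "a n = (SOME y. y \<in> A n)" for n
    have aA: "a n \<in> A n" for n unfolding a_def using ne[of n] by (simp add: some_in_eq)
    have sym: "\<forall>x\<in>X. \<forall>y\<in>X. d x y = d y x" using M unfolding star_metric_def by auto
    have small: "\<exists>N. \<forall>y\<in>A N. \<forall>z\<in>A N. d y z < \<epsilon>" if ep: "\<epsilon> > 0" for \<epsilon>
    proof -
      obtain \<delta> where \<delta>: "\<delta> > 0" "\<forall>x\<in>X. \<forall>y\<in>X. \<forall>z\<in>X. d x z < \<delta> \<longrightarrow> d z y < \<delta> \<longrightarrow> d x y < \<epsilon>"
        using T2[OF T M ep] by blast
      obtain N0 where N0: "inverse (real (Suc N0)) < \<delta>" using reals_Archimedean[OF \<delta>(1)] by blast
      have rN: "r N0 < \<delta>" using N0 unfolding r_def by (simp add: inverse_eq_divide)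
      show ?thesis
      proof (intro exI[of _ "Suc N0"] ballI)
        fix y z assume yz: "y \<in> A (Suc N0)" "z \<in> A (Suc N0)"
        let ?c = "cen (A N0) N0"
        have yX: "y \<in> X" and zX: "z \<in> X" using yz AX by blast+
        have "d ?c y < r N0" "d ?c z < r N0" using yz unfolding AS sball_def by auto
        moreover have "d y ?c = d ?c y" using sym cenX yX by blast
        ultimately have "d y ?c < \<delta>" "d ?c z < \<delta>" using rN by linarith+
        then show "d y z < \<epsilon>" using \<delta>(2) yX zX cenX by blast
      qed
    qed
    have aX: "a n \<in> X" for n using aA AX by blast
    have "star_Cauchy X d a"
      unfolding star_Cauchy_def
    proof (intro conjI allI impI)
      fix \<epsilon> :: real assume "\<epsilon> > 0"
      then obtain N where N: "\<forall>y\<in>A N. \<forall>z\<in>A N. d y z < \<epsilon>" using small by blast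
      show "\<exists>k. \<forall>m\<ge>k. \<forall>n\<ge>k. d (a n) (a m) < \<epsilon>"
      proof (intro exI[of _ N] allI impI)
        fix m n assume "N \<le> m" "N \<le> n"
        then have "a m \<in> A N" "a n \<in> A N" using aA mono by blast+
        then show "d (a n) (a m) < \<epsilon>" using N by blast
      qed
    qed (rule aX)
    then obtain p where p: "p \<in> X" "star_converges X d a p" using Cp unfolding star_complete_def by blast
    obtain u where u: "u \<in> \<U>" "p \<in> u" using cov p(1) by blast
    obtain \<rho> where \<rho>: "\<rho> > 0" "sball X d p \<rho> \<subseteq> u"
      using op u unfolding openin_star by blast
    obtain \<delta>1 where \<delta>1: "\<delta>1 > 0" "\<forall>x\<in>X. \<forall>y\<in>X. \<forall>z\<in>X. d x z < \<delta>1 \<longrightarrow> d z y < \<delta>1 \<longrightarrow> d x y < \<rho>"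
      using T2[OF T M \<rho>(1)] by blast
    obtain N where N: "\<forall>y\<in>A N. \<forall>z\<in>A N. d y z < \<delta>1" using small[OF \<delta>1(1)] by blast
    obtain k where k: "\<forall>n\<ge>k. d p (a n) < \<delta>1" using p(2) \<delta>1(1) unfolding star_converges_def by blast
    define n where "n = max N k"
    have "A n \<subseteq> sball X d p \<rho>"
    proof
      fix y assume y: "y \<in> A n"
      have "A n \<subseteq> A N" using mono n_def by simp
      then have "d (a n) y < \<delta>1" using N y aA by blast
      moreover have "d p (a n) < \<delta>1" using k n_def by simp
      moreover have "y \<in> X" using y AX by blast
      ultimately show "y \<in> sball X d p \<rho>" using \<delta>1(2) p(1) aX unfolding sball_def by blast
    qed
    then have "A n \<subseteq> \<Union>{u}" using \<rho> by auto
    then show False using badA[of n] u(1) unfolding bad_def by blast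
  qed
qed

theorem theorem4p6:
  fixes star :: "real \<Rightarrow> real \<Rightarrow> real" and X :: "'a set" and d :: "'a \<Rightarrow> 'a \<Rightarrow> real"
  assumes "t_definer star" and "X \<noteq> {}" and "star_metric star X d"
  shows "compact_space (star_topology X d) \<longleftrightarrow> star_complete X d \<and> star_totally_bounded X d"
  using compact_imp_tb[OF assms(1,3)] compact_imp_complete[OF assms(1,3)]
    tb_complete_imp_compact[OF assms(1,3)] by blast

end
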